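(* For $z\in L_T$, $s>0$ and $T>e$, \[P(X(sT)=r(T)z)\ge\exp\Big(-a(T)T\big(q|z|+\mathcal{E}^1_T(s,|z|)\big)\Big).\]
   Context: $X(u)$, $u\ge0$, is a continuous-time simple symmetric random walk on $\mathbb{Z}^d$ started at $0$, jumping to each of its $2d$ neighbours at rate $1$, under a probability measure $P$. $|\cdot|$ is the $\ell_1$-norm. $\alpha>d$, $q=d/(\alpha-d)$, $a(T)=(T/\log T)^q$, $r(T)=(T/\log T)^{q+1}$, $L_T=\{z\in\mathbb{R}^d: r(T)z\in\mathbb{Z}^d\}$. For $s>0$, $R\ge0$: $\mathcal{E}^1_T(s,R)=\frac{R}{\log T}(\log R-\log s)+\frac{2ds}{a(T)}$ (with the convention $0\log 0=0$). *)

theory Defs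
  imports "HOL-Analysis.Analysis"
begin

text \<open>The lattice Z^d is rendered as int^'n, with d = CARD('n).\<close>

definition unit_steps :: "(int^'n) set" where
  "unit_steps = {e. \<exists>i. \<exists>\<sigma>\<in>{1, -1}. e = (\<chi> j. if j = i then \<sigma> else 0)}"

fun walk_count :: "nat \<Rightarrow> int^'n \<Rightarrow> nat" where
  "walk_count 0 x = (if x = 0 then 1 else 0)"
| "walk_count (Suc n) x = (\<Sum>e\<in>unit_steps. walk_count n (x - e))"

text \<open>P(X(t) = x) for the continuous-time simple symmetric random walk started at 0,
  jumping to each of its 2d neighbours at rate 1: the number of jumps up to time t is
  Poisson(2dt), and given n jumps the position is the n-step discrete SRW.\<close>
definition srw_prob :: "real \<Rightarrow> int^'n \<Rightarrow> real" where
  "srw_prob t x = (\<Sum>n. exp (-(2 * real CARD('n) * t)) * (2 * real CARD('n) * t) ^ n / fact n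
                        * (real (walk_count n x) / (2 * real CARD('n)) ^ n))"

definition l1norm :: "real^'n \<Rightarrow> real" where
  "l1norm z = (\<Sum>i\<in>UNIV. \<bar>z $ i\<bar>)"

definition qexp :: "real \<Rightarrow> nat \<Rightarrow> real" where
  "qexp \<alpha> d = real d / (\<alpha> - real d)"

definition aT :: "real \<Rightarrow> nat \<Rightarrow> real \<Rightarrow> real" where
  "aT \<alpha> d T = (T / ln T) powr (qexp \<alpha> d)"

definition rT :: "real \<Rightarrow> nat \<Rightarrow> real \<Rightarrow> real" where
  "rT \<alpha> d T = (T / ln T) powr (qexp \<alpha> d + 1)"

text \<open>E^1_T(s,R), with the convention 0 log 0 = 0.\<close>
definition E1 :: "real \<Rightarrow> nat \<Rightarrow> real \<Rightarrow> real \<Rightarrow> real \<Rightarrow> real" where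
  "E1 \<alpha> d T s R = (if R = 0 then 0 else R / ln T * (ln R - ln s)) + 2 * real d * s / aT \<alpha> d T"

end

theory Submission imports Defs begin

definition ustep :: "'n \<Rightarrow> int \<Rightarrow> int^'n" where
  "ustep i \<sigma> = (\<chi> j. if j = i then \<sigma> else 0)"

lemma unit_steps_img: "unit_steps = (\<lambda>(i,\<sigma>). ustep i \<sigma>) ` (UNIV \<times> {1,-1})"
  unfolding unit_steps_def ustep_def by fastforce

lemma unit_steps_finite: "finite (unit_steps :: (int^'n::finite) set)"
  unfolding unit_steps_img by simp

lemma unit_steps_card: "card (unit_steps :: (int^'n::finite) set) \<le> 2 * CARD('n)"
proof -
  have "card (unit_steps :: (int^'n) set) \<le> card (UNIV \<times> {1::int,-1} :: ('n \<times> int) set)"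
    unfolding unit_steps_img by (rule card_image_le) simp
  also have "\<dots> = 2 * CARD('n)" by (simp add: card_cartesian_product)
  finally show ?thesis .
qed

lemma walk_count_le: "walk_count n (x::int^'n::finite) \<le> (2 * CARD('n)) ^ n"
proof (induction n arbitrary: x)
  case 0 then show ?case by simp
next
  case (Suc n)
  have "walk_count (Suc n) x = (\<Sum>e\<in>unit_steps. walk_count n (x - e))" by simp
  also have "\<dots> \<le> card (unit_steps :: (int^'n) set) * (2 * CARD('n)) ^ n"
    using sum_bounded_above[of "unit_steps :: (int^'n) set" "\<lambda>e. walk_count n (x - e)" "(2 * CARD('n)) ^ n"] Suc
    by simp
  also have "\<dots> \<le> (2 * CARD('n)) * (2 * CARD('n)) ^ n"
    using unit_steps_card by (intro mult_right_mono) auto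
  finally show ?case by simp
qed

lemma walk_count_ge:
  "(\<Sum>i\<in>UNIV. \<bar>(x::int^'n::finite) $ i\<bar>) = int m \<Longrightarrow> walk_count m x \<ge> 1"
proof (induction m arbitrary: x)
  case 0
  then have "\<forall>i. x $ i = 0"
    using sum_nonneg_eq_0_iff[of "UNIV::'n set" "\<lambda>i. \<bar>x $ i\<bar>"] by simp
  then have "x = 0" by (simp add: vec_eq_iff)
  then show ?case by simp
next
  case (Suc m)
  obtain i where i: "x $ i \<noteq> 0"
    using Suc.prems by (metis (no_types, lifting) abs_zero of_nat_Suc of_nat_neq_0 sum.neutral)
  define e where "e = ustep i (sgn (x $ i))"
  have eU: "e \<in> unit_steps"
    unfolding unit_steps_img e_def using i by (auto simp: sgn_if)
  have pw: "\<bar>(x - e) $ j\<bar> = \<bar>x $ j\<bar> - (if j = i then 1 else 0)" for j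
    using i by (auto simp: e_def ustep_def sgn_if)
  have "(\<Sum>j\<in>UNIV. \<bar>(x - e) $ j\<bar>) = (\<Sum>j\<in>UNIV. \<bar>x $ j\<bar>) - (\<Sum>j\<in>UNIV. (if j = i then 1 else 0))"
    unfolding pw by (rule sum_subtractf)
  also have "\<dots> = int m" using Suc.prems by simp
  finally have "1 \<le> walk_count m (x - e)" using Suc.IH by blast
  also have "\<dots> \<le> (\<Sum>e\<in>unit_steps. walk_count m (x - e))"
    by (rule member_le_sum[OF eU _ unit_steps_finite]) simp
  finally show ?case by simp
qed

lemma srw_ge_term:
  fixes x :: "int^'n::finite"
  assumes t: "t \<ge> 0"
  shows "srw_prob t x \<ge> exp (-(2 * real CARD('n) * t)) * (2 * real CARD('n) * t) ^ N / fact N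
                        * (real (walk_count N x) / (2 * real CARD('n)) ^ N)"
proof -
  define c where "c = 2 * real CARD('n) * t"
  define f where "f n = exp (-c) * c ^ n / fact n * (real (walk_count n x) / (2 * real CARD('n)) ^ n)" for n
  have c0: "c \<ge> 0" using t by (simp add: c_def)
  have f0: "f n \<ge> 0" for n using c0 by (simp add: f_def)
  have fle: "f n \<le> exp (-c) * (inverse (fact n) * c ^ n)" for n
  proof -
    have "real (walk_count n x) \<le> (2 * real CARD('n)) ^ n"
      using walk_count_le[of n x] by (metis of_nat_le_iff of_nat_mult of_nat_numeral of_nat_power)
    then have "real (walk_count n x) / (2 * real CARD('n)) ^ n \<le> 1"
      by (simp add: divide_le_eq_1)
    moreover have "exp (-c) * c ^ n / fact n \<ge> 0" using c0 by simp
    ultimately have "f n \<le> exp (-c) * c ^ n / fact n * 1" unfolding f_def by (intro mult_left_mono)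
    then show ?thesis by (simp add: field_simps)
  qed
  have sg: "summable (\<lambda>n. exp (-c) * (inverse (fact n) * c ^ n))"
    by (intro summable_mult summable_exp)
  have sf: "summable f"
    by (rule summable_comparison_test'[OF sg, of 0]) (use f0 fle in auto)
  have "f N = sum f {N}" by simp
  also have "\<dots> \<le> suminf f" by (rule sum_le_suminf[OF sf]) (auto simp: f0)
  finally show ?thesis unfolding srw_prob_def f_def c_def .
qed

theorem lemma2p3:
  fixes \<alpha> T s :: real and z :: "real^'n" and x :: "int^'n"
  assumes "\<alpha> > real CARD('n)"
    and "T > exp 1" and "s > 0"
    and "\<forall>i. real_of_int (x $ i) = rT \<alpha> CARD('n) T * z $ i"
  shows "srw_prob (s * T) x \<ge>
    exp (- (aT \<alpha> CARD('n) T * T * (qexp \<alpha> CARD('n) * l1norm z + E1 \<alpha> CARD('n) T s (l1norm z))))"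
proof -
  define d where "d = real CARD('n)"
  define q where "q = qexp \<alpha> CARD('n)"
  define a where "a = aT \<alpha> CARD('n) T"
  define r where "r = rT \<alpha> CARD('n) T"
  define R where "R = l1norm z"
  define L where "L = ln T"
  define B where "B = T / L"
  define t where "t = s * T"
  have d0: "d > 0" by (simp add: d_def)
  have q0: "q > 0" using assms(1) d0 by (simp add: q_def qexp_def d_def)
  have e1: "exp 1 > (1::real)" by simp
  have T0: "T > 1" using assms(2) e1 by linarith
  have L1: "L > 1"
  proof -
    have "ln (exp 1) < ln T" using assms(2) T0 by (subst ln_less_cancel_iff) auto
    then show ?thesis by (simp add: L_def)
  qed
  have B0: "B > 0" using L1 T0 by (simp add: B_def)
  have a_def': "a = B powr q" by (simp add: a_def aT_def B_def L_def q_def)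
  have a0: "a > 0" using B0 by (simp add: a_def')
  have rB: "r = a * B" using B0 by (simp add: r_def rT_def a_def' B_def[symmetric] L_def[symmetric] q_def powr_add)
  have r0: "r > 0" using a0 B0 rB by simp
  have t0: "t > 0" using assms(3) T0 by (simp add: t_def)
  have R0: "R \<ge> 0" by (simp add: R_def l1norm_def sum_nonneg)
  define Ni where "Ni = (\<Sum>i\<in>UNIV. \<bar>x $ i\<bar>)"
  define N where "N = nat Ni"
  have Ni0: "Ni \<ge> 0" by (simp add: Ni_def sum_nonneg)
  have NiN: "Ni = int N" using Ni0 by (simp add: N_def)
  have NR: "real N = r * R"
  proof -
    have "real N = real_of_int Ni" using NiN by simp
    also have "\<dots> = (\<Sum>i\<in>UNIV. \<bar>real_of_int (x $ i)\<bar>)" by (simp add: Ni_def)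
    also have "\<dots> = (\<Sum>i\<in>UNIV. r * \<bar>z $ i\<bar>)"
      using assms(4) r0 by (simp add: r_def[symmetric] abs_mult)
    also have "\<dots> = r * R" by (simp add: R_def l1norm_def sum_distrib_left)
    finally show ?thesis .
  qed
  have wc: "walk_count N x \<ge> 1" using walk_count_ge[of x N] NiN Ni_def by simp
  have step1: "srw_prob t x \<ge> exp (-(2 * d * t)) * t ^ N / fact N"
  proof -
    have "exp (-(2 * d * t)) * t ^ N / fact N
        = exp (-(2 * d * t)) * (2 * d * t) ^ N / fact N * (1 / (2 * d) ^ N)"
      using d0 by (simp add: power_mult_distrib field_simps)
    also have "\<dots> \<le> exp (-(2 * d * t)) * (2 * d * t) ^ N / fact N * (real (walk_count N x) / (2 * d) ^ N)"
      using wc d0 t0 by (intro mult_left_mono divide_right_mono) auto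
    also have "\<dots> \<le> srw_prob t x" using srw_ge_term[where t=t and x=x and N=N] t0 by (simp add: d_def)
    finally show ?thesis .
  qed
  have goal: "exp (-(2 * d * t)) * t ^ N / fact N \<ge> exp (- (a * T * (q * R + E1 \<alpha> CARD('n) T s R)))"
  proof (cases "R = 0")
    case True
    then have "N = 0" using NR by simp
    then show ?thesis using True a0
      by (simp add: E1_def a_def[symmetric] d_def[symmetric] t_def field_simps)
  next
    case False
    then have Rp: "R > 0" using R0 by simp
    have Np: "real N > 0" using NR Rp r0 by simp
    have E1: "a * T * (q * R + E1 \<alpha> CARD('n) T s R) = q * N * L + N * (ln R - ln s) + 2 * d * t"
    proof -
      have "a * T = r * L" using rB L1 by (simp add: B_def)
      then have "a * T * (q * R + E1 \<alpha> CARD('n) T s R)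
          = r * L * (q * R + R / L * (ln R - ln s)) + 2 * d * s * T"
        using False a0 L1 by (simp add: E1_def a_def[symmetric] d_def[symmetric] L_def[symmetric] field_simps)
      also have "\<dots> = q * N * L + N * (ln R - ln s) + 2 * d * t"
        using NR L1 by (simp add: t_def field_simps)
      finally show ?thesis .
    qed
    have lnfact: "ln (fact N) \<le> N * ln N"
    proof -
      have "(fact N :: real) \<le> real N ^ N" using fact_le_power[of N, where 'a=real] by simp
      then have "ln (fact N) \<le> ln (real N ^ N)" using Np by (subst ln_le_cancel_iff) auto
      then show ?thesis using Np by (simp add: ln_realpow)
    qed
    have lnN: "ln (real N) \<le> (q + 1) * L + ln R"
    proof -
      have "ln (real N) = ln r + ln R" using NR r0 Rp by (simp add: ln_mult)
      moreover have "ln r = (q + 1) * (L - ln L)"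
      proof -
        have "r = B powr (q + 1)" by (simp add: r_def rT_def q_def B_def L_def)
        then have "ln r = (q + 1) * ln B" using B0 by (simp add: ln_powr)
        moreover have "ln B = L - ln L" using L1 T0 by (simp add: B_def ln_div L_def)
        ultimately show ?thesis by simp
      qed
      moreover have "(q + 1) * (L - ln L) \<le> (q + 1) * L"
        using q0 L1 by (intro mult_left_mono) auto
      ultimately show ?thesis by linarith
    qed
    have key: "ln (fact N) \<le> N * ((q + 1) * L + ln R)"
      using lnfact mult_left_mono[OF lnN, of "real N"] Np by linarith
    have lt: "ln t = ln s + L" using assms(3) T0 by (simp add: t_def L_def ln_mult)
    have "t ^ N / fact N = exp (N * ln t - ln (fact N))"
      using t0 by (simp add: exp_diff exp_of_nat_mult)
    then have lhs: "exp (-(2 * d * t)) * t ^ N / fact N = exp (-(2 * d * t) + (N * ln t - ln (fact N)))"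
      by (metis exp_add times_divide_eq_right)
    show ?thesis unfolding lhs E1 using key lt
      by (simp add: algebra_simps)
  qed
  show ?thesis using step1 goal
    by (simp add: a_def q_def R_def t_def)
qed

end
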